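(* Let $\Sigma$, $\mathcal I$, $P$ and $R(\cdot)$ be as follows: $\Sigma\subseteq\mathcal L_\Diamond$ is finite and closed under subformulas; $\mathcal I$ is a finite weak $\Sigma$-quasimodel such that for every deterministic weak $\mathcal L_\Diamond$-quasimodel $\mathcal A$ the relation $\rightharpoonup\ \subseteq|\mathcal I|\times|\mathcal A|$ is a surjective dynamic simulation; $P=\{w\in|\mathcal I|:\not\vdash\mathrm{Sim}(w)\}$; and $R(w)$ is the set of $v\in P$ reachable from $w$ by a finite $S_{\mathcal I}$-path all of whose elements lie in $P$. If $w\in P$ and $\Diamond\psi\in\ell^+(w)$, then there is $v\in R(w)$ with $\psi\in\ell^+(v)$.
   Context: $\mathcal L_\Diamond$ is the propositional language with $\bot,\wedge,\vee,\to$ and unary modalities $\bigcirc$, $\Diamond$. ${\sf ITL}^0_\Diamond$ is axiomatized by all intuitionistic propositional tautologies, $\neg\bigcirc\bot$, $\bigcirc\varphi\wedge\bigcirc\psi\to\bigcirc(\varphi\wedge\psi)$, $\bigcirc(\varphi\vee\psi)\to\bigcirc\varphi\vee\bigcirc\psi$, $\bigcirc(\varphi\to\psi)\to(\bigcirc\varphi\to\bigcirc\psi)$, $\varphi\vee\bigcirc\Diamond\varphi\to\Diamond\varphi$, closed under modus ponens and the rules $\varphi/\bigcirc\varphi$, $(\varphi\to\psi)/(\Diamond\varphi\to\Diamond\psi)$, $(\bigcirc\varphi\to\varphi)/(\Diamond\varphi\to\varphi)$; $\vdash\varphi$ means $\varphi\in{\sf ITL}^0_\Diamond$. A path $u_0,\dots,u_n$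 ($n\ge0$) is an $S_{\mathcal I}$-path if $u_i\,S_{\mathcal I}\,u_{i+1}$ for $i<n$. Types: a $\Sigma$-type is a pair $\Phi=(\Phi^-;\Phi^+)$ of subsets of $\Sigma$ with $\Phi^-\cap\Phi^+=\varnothing$, $\Phi^-\cup\Phi^+=\Sigma$, $\bot\notin\Phi^+$, $\wedge,\vee$ in $\Phi^+$ behaving classically, ($\varphi\to\psi\in\Phi^+\Rightarrow\varphi\in\Phi^-$ or $\psi\in\Phi^+$), ($\Diamond\varphi\in\Phi^-\Rightarrow\varphi\in\Phi^-$). $\Phi\preccurlyeq_T\Psi$ iff $\Phi^+\subseteq\Psi^+$; $\Phi\subseteq_T\Psi$ iff $\Phi^-\subseteq\Psi^-$, $\Phi^+\subseteq\Psi^+$. $\Phi\,S_T\,\Psi$ iff: $\bigcirc\varphi\in\Phi^+\Rightarrow\varphi\in\Psi^+$; $\bigcirc\varphi\in\Phi^-\Rightarrow\varphi\in\Psi^-$; ($\Diamond\varphi\in\Phi^+$, $\varphi\in\Phi^-$)$\Rightarrow\Diamond\varphi\in\Psi^+$; $\Diamond\varphi\in\Phi^-\Rightarrow\Diamond\varphi\in\Psi^-$. A $\Sigma$-labelled frame is $(W,\preccurlyeq,\ell)$, $\preccurlyeq$ a partial order, $\ell$ mapping to $\Sigma$-types, monotone w.r.t. $\preccurlyeq_T$, and if $\varphi\to\psi\in\ell^-(w)$ then some $v\succcurlyeq w$ has $\varphi\in\ell^+(v)$, $\psi\in\ell^-(v)$. A weak $\Sigma$-quasimodel adds $S\subseteq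 W\times W$ forward-confluent (if $w\preccurlyeq w'$, $w\,S\,v$ then some $v'\succcurlyeq v$ has $w'\,S\,v'$) and sensible ($w\,S\,v\Rightarrow\ell(w)\,S_T\,\ell(v)$); deterministic if $S$ is a function. A simulation from a $\Sigma$-labelled $\mathcal X$ to a $\Delta$-labelled $\mathcal Y$ ($\Sigma\subseteq\Delta$) is a forward-confluent $E\subseteq|\mathcal X|\times|\mathcal Y|$ with $x\,E\,y\Rightarrow\ell(x)\subseteq_T\ell(y)$; $x\rightharpoonup y$ iff some simulation relates them; $E$ is dynamic if $x\,E\,y$ and $y\,S\,y'$ imply some $x'$ with $x\,S\,x'$, $x'\,E\,y'$; surjective if every point of $\mathcal A$ is in its range. $\mathrm{Sim}(w)=\bigwedge\ell^+(w)\to\big(\bigvee\ell^-(w)\vee\bigvee_{v\succ w}\mathrm{Sim}(v)\big)$, defined by backwards induction on $\prec$ ($\bigwedge\varnothing=\top$, $\bigvee\varnothing=\bot$). *)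

theory Defs
  imports Main
begin

datatype fm =
    Var nat
  | Bot
  | And fm fm
  | Or fm fm
  | Imp fm fm
  | Next fm
  | Dia fm

definition Top :: fm where "Top = Imp Bot Bot"
definition Neg :: "fm \<Rightarrow> fm" where "Neg \<phi> = Imp \<phi> Bot"

fun subfms :: "fm \<Rightarrow> fm set" where
  "subfms (Var n) = {Var n}"
| "subfms Bot = {Bot}"
| "subfms (And a b) = insert (And a b) (subfms a \<union> subfms b)"
| "subfms (Or a b) = insert (Or a b) (subfms a \<union> subfms b)"
| "subfms (Imp a b) = insert (Imp a b) (subfms a \<union> subfms b)"
| "subfms (Next a) = insert (Next a) (subfms a)"
| "subfms (Dia a) = insert (Dia a) (subfms a)"

definition subfm_closed :: "fm set \<Rightarrow> bool" where
  "subfm_closed \<Sigma> \<longleftrightarrow> (\<forall>\<phi>\<in>\<Sigma>. subfms \<phi> \<subseteq> \<Sigma>)"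

text \<open>Intuitionistic propositional tautologies (all substitution instances in L_Diamond)
  are generated by a standard Hilbert-style axiomatisation of intuitionistic
  propositional logic together with modus ponens.\<close>

inductive ipc_axiom :: "fm \<Rightarrow> bool" where
  ax_K: "ipc_axiom (Imp a (Imp b a))"
| ax_S: "ipc_axiom (Imp (Imp a (Imp b c)) (Imp (Imp a b) (Imp a c)))"
| ax_conjE1: "ipc_axiom (Imp (And a b) a)"
| ax_conjE2: "ipc_axiom (Imp (And a b) b)"
| ax_conjI: "ipc_axiom (Imp a (Imp b (And a b)))"
| ax_disjI1: "ipc_axiom (Imp a (Or a b))"
| ax_disjI2: "ipc_axiom (Imp b (Or a b))"
| ax_disjE: "ipc_axiom (Imp (Imp a c) (Imp (Imp b c) (Imp (Or a b) c)))"
| ax_efq: "ipc_axiom (Imp Bot a)"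

inductive prov :: "fm \<Rightarrow> bool" where
  ipc: "ipc_axiom \<phi> \<Longrightarrow> prov \<phi>"
| next_bot: "prov (Neg (Next Bot))"
| next_and: "prov (Imp (And (Next a) (Next b)) (Next (And a b)))"
| next_or: "prov (Imp (Next (Or a b)) (Or (Next a) (Next b)))"
| next_imp: "prov (Imp (Next (Imp a b)) (Imp (Next a) (Next b)))"
| dia_fix: "prov (Imp (Or a (Next (Dia a))) (Dia a))"
| mp: "prov (Imp a b) \<Longrightarrow> prov a \<Longrightarrow> prov b"
| nec: "prov a \<Longrightarrow> prov (Next a)"
| dia_mono: "prov (Imp a b) \<Longrightarrow> prov (Imp (Dia a) (Dia b))"
| dia_ind: "prov (Imp (Next a) a) \<Longrightarrow> prov (Imp (Dia a) a)"

text \<open>A type is a pair (minus, plus).\<close>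

type_synonym ltype = "fm set \<times> fm set"

definition is_type :: "fm set \<Rightarrow> ltype \<Rightarrow> bool" where
  "is_type \<Sigma> \<Phi> \<longleftrightarrow> (let M = fst \<Phi>; P = snd \<Phi> in
     M \<subseteq> \<Sigma> \<and> P \<subseteq> \<Sigma> \<and> M \<inter> P = {} \<and> M \<union> P = \<Sigma> \<and> Bot \<notin> P \<and>
     (\<forall>a b. And a b \<in> \<Sigma> \<longrightarrow> (And a b \<in> P \<longleftrightarrow> a \<in> P \<and> b \<in> P)) \<and>
     (\<forall>a b. Or a b \<in> \<Sigma> \<longrightarrow> (Or a b \<in> P \<longleftrightarrow> a \<in> P \<or> b \<in> P)) \<and>
     (\<forall>a b. Imp a b \<in> P \<longrightarrow> a \<in> M \<or> b \<in> P) \<and>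
     (\<forall>a. Dia a \<in> M \<longrightarrow> a \<in> M))"

definition type_le :: "ltype \<Rightarrow> ltype \<Rightarrow> bool" where
  "type_le \<Phi> \<Psi> \<longleftrightarrow> snd \<Phi> \<subseteq> snd \<Psi>"

definition type_sub :: "ltype \<Rightarrow> ltype \<Rightarrow> bool" where
  "type_sub \<Phi> \<Psi> \<longleftrightarrow> fst \<Phi> \<subseteq> fst \<Psi> \<and> snd \<Phi> \<subseteq> snd \<Psi>"

definition type_S :: "ltype \<Rightarrow> ltype \<Rightarrow> bool" where
  "type_S \<Phi> \<Psi> \<longleftrightarrow>
     (\<forall>a. Next a \<in> snd \<Phi> \<longrightarrow> a \<in> snd \<Psi>) \<and>
     (\<forall>a. Next a \<in> fst \<Phi> \<longrightarrow> a \<in> fst \<Psi>) \<and>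
     (\<forall>a. Dia a \<in> snd \<Phi> \<and> a \<in> fst \<Phi> \<longrightarrow> Dia a \<in> snd \<Psi>) \<and>
     (\<forall>a. Dia a \<in> fst \<Phi> \<longrightarrow> Dia a \<in> fst \<Psi>)"

record 'w frame =
  carrier :: "'w set"
  leq :: "'w \<Rightarrow> 'w \<Rightarrow> bool"
  lab :: "'w \<Rightarrow> ltype"
  succ :: "'w \<Rightarrow> 'w \<Rightarrow> bool"

definition labelled_frame :: "fm set \<Rightarrow> 'w frame \<Rightarrow> bool" where
  "labelled_frame \<Sigma> F \<longleftrightarrow>
     (\<forall>w\<in>carrier F. leq F w w) \<and>
     (\<forall>u\<in>carrier F. \<forall>v\<in>carrier F. \<forall>w\<in>carrier F.
        leq F u v \<longrightarrow> leq F v w \<longrightarrow> leq F u w) \<and>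
     (\<forall>u\<in>carrier F. \<forall>v\<in>carrier F. leq F u v \<longrightarrow> leq F v u \<longrightarrow> u = v) \<and>
     (\<forall>w\<in>carrier F. is_type \<Sigma> (lab F w)) \<and>
     (\<forall>w\<in>carrier F. \<forall>v\<in>carrier F. leq F w v \<longrightarrow> type_le (lab F w) (lab F v)) \<and>
     (\<forall>w\<in>carrier F. \<forall>a b. Imp a b \<in> fst (lab F w) \<longrightarrow>
        (\<exists>v\<in>carrier F. leq F w v \<and> a \<in> snd (lab F v) \<and> b \<in> fst (lab F v)))"

definition weak_quasimodel :: "fm set \<Rightarrow> 'w frame \<Rightarrow> bool" where
  "weak_quasimodel \<Sigma> F \<longleftrightarrow> labelled_frame \<Sigma> F \<and>
     (\<forall>w v. succ F w v \<longrightarrow> w \<in> carrier F \<and> v \<in> carrier F) \<and>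
     (\<forall>w\<in>carrier F. \<forall>w'\<in>carrier F. \<forall>v. leq F w w' \<longrightarrow> succ F w v \<longrightarrow>
        (\<exists>v'\<in>carrier F. leq F v v' \<and> succ F w' v')) \<and>
     (\<forall>w v. succ F w v \<longrightarrow> type_S (lab F w) (lab F v))"

definition deterministic :: "'w frame \<Rightarrow> bool" where
  "deterministic F \<longleftrightarrow> (\<forall>w\<in>carrier F. \<exists>!v. succ F w v)"

definition simulation :: "'a frame \<Rightarrow> 'b frame \<Rightarrow> ('a \<Rightarrow> 'b \<Rightarrow> bool) \<Rightarrow> bool" where
  "simulation X Y E \<longleftrightarrow>
     (\<forall>x y. E x y \<longrightarrow> x \<in> carrier X \<and> y \<in> carrier Y \<and> type_sub (lab X x) (lab Y y)) \<and>
     (\<forall>x y x'. E x y \<longrightarrow> x' \<in> carrier X \<longrightarrow> leq X x x' \<longrightarrow>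
        (\<exists>y'\<in>carrier Y. leq Y y y' \<and> E x' y'))"

definition simulates :: "'a frame \<Rightarrow> 'b frame \<Rightarrow> 'a \<Rightarrow> 'b \<Rightarrow> bool" where
  "simulates X Y x y \<longleftrightarrow> (\<exists>E. simulation X Y E \<and> E x y)"

definition dynamic :: "'a frame \<Rightarrow> 'b frame \<Rightarrow> ('a \<Rightarrow> 'b \<Rightarrow> bool) \<Rightarrow> bool" where
  "dynamic X Y E \<longleftrightarrow>
     (\<forall>x y y'. E x y \<longrightarrow> succ Y y y' \<longrightarrow> (\<exists>x'. succ X x x' \<and> E x' y'))"

definition surjective :: "'a frame \<Rightarrow> 'b frame \<Rightarrow> ('a \<Rightarrow> 'b \<Rightarrow> bool) \<Rightarrow> bool" where
  "surjective X Y E \<longleftrightarrow> (\<forall>y\<in>carrier Y. \<exists>x. E x y)"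

definition big_conj :: "fm set \<Rightarrow> fm" where
  "big_conj S = foldr And (SOME xs. set xs = S) Top"

definition big_disj :: "fm set \<Rightarrow> fm" where
  "big_disj S = foldr Or (SOME xs. set xs = S) Bot"

text \<open>Sim by backwards induction on the strict order, realised with fuel; since the
  frame is finite, fuel card W is enough for every chain above w.\<close>

fun sim_fuel :: "'w frame \<Rightarrow> nat \<Rightarrow> 'w \<Rightarrow> fm" where
  "sim_fuel F 0 w = Imp (big_conj (snd (lab F w))) (Or (big_disj (fst (lab F w))) Bot)"
| "sim_fuel F (Suc n) w = Imp (big_conj (snd (lab F w)))
     (Or (big_disj (fst (lab F w)))
         (big_disj (sim_fuel F n ` {v \<in> carrier F. leq F w v \<and> v \<noteq> w})))"

definition Sim :: "'w frame \<Rightarrow> 'w \<Rightarrow> fm" where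
  "Sim F w = sim_fuel F (card (carrier F)) w"

definition Pset :: "'w frame \<Rightarrow> 'w set" where
  "Pset F = {w \<in> carrier F. \<not> prov (Sim F w)}"

definition is_S_path :: "'w frame \<Rightarrow> 'w list \<Rightarrow> bool" where
  "is_S_path F us \<longleftrightarrow> us \<noteq> [] \<and> (\<forall>i. Suc i < length us \<longrightarrow> succ F (us ! i) (us ! Suc i))"

definition Rset :: "'w frame \<Rightarrow> 'w \<Rightarrow> 'w set" where
  "Rset F w = {v \<in> Pset F. \<exists>us. is_S_path F us \<and> hd us = w \<and> last us = v \<and> set us \<subseteq> Pset F}"

end

theory Submission
  imports Defs
begin

inductive deriv :: "fm set \<Rightarrow> fm \<Rightarrow> bool" for M where
  dassm: "a \<in> M \<Longrightarrow> deriv M a"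
| dax: "prov a \<Longrightarrow> deriv M a"
| dmp: "deriv M (Imp a b) \<Longrightarrow> deriv M a \<Longrightarrow> deriv M b"

lemma pK: "prov (Imp a (Imp b a))" by (intro prov.ipc ipc_axiom.intros)
lemma pS: "prov (Imp (Imp a (Imp b c)) (Imp (Imp a b) (Imp a c)))" by (intro prov.ipc ipc_axiom.intros)

lemma prov_id: "prov (Imp a a)"
proof -
  have "prov (Imp (Imp a (Imp a a)) (Imp a a))"
    using prov.mp[OF pS pK] .
  thus ?thesis using prov.mp pK by blast
qed

lemma deduction: "deriv (insert a M) b \<Longrightarrow> deriv M (Imp a b)"
proof (induction rule: deriv.induct)
  case (dassm c)
  then show ?case
  proof
    assume "c = a" thus ?thesis using prov_id deriv.dax by blast
  next
    assume "c \<in> M" thus ?thesis using deriv.dmp[OF deriv.dax[OF pK] deriv.dassm] by blast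
  qed
next
  case (dax c)
  then show ?case using deriv.dmp[OF deriv.dax[OF pK] deriv.dax] by blast
next
  case (dmp c d)
  then show ?case using deriv.dmp[OF deriv.dmp[OF deriv.dax[OF pS]]] by blast
qed

lemma deriv_mono: "deriv M a \<Longrightarrow> M \<subseteq> M' \<Longrightarrow> deriv M' a"
  by (induction rule: deriv.induct) (auto intro: deriv.intros)

lemma deriv_finite: "deriv M a \<Longrightarrow> \<exists>F. finite F \<and> F \<subseteq> M \<and> deriv F a"
proof (induction rule: deriv.induct)
  case (dassm a) thus ?case by (intro exI[of _ "{a}"]) (auto intro: deriv.intros)
next
  case (dax a) thus ?case by (intro exI[of _ "{}"]) (auto intro: deriv.intros)
next
  case (dmp a b)
  then obtain F1 F2 where "finite F1" "F1 \<subseteq> M" "deriv F1 (Imp a b)" "finite F2" "F2 \<subseteq> M" "deriv F2 a" by blast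
  thus ?case by (intro exI[of _ "F1 \<union> F2"]) (auto intro: deriv.dmp deriv_mono)
qed

lemma deriv_empty: "deriv {} a \<Longrightarrow> prov a"
  by (induction rule: deriv.induct) (auto intro: prov.mp)

definition primeT :: "fm set \<Rightarrow> bool" where
  "primeT T \<longleftrightarrow> (\<forall>a. deriv T a \<longrightarrow> a \<in> T) \<and> Bot \<notin> T \<and> (\<forall>a b. Or a b \<in> T \<longrightarrow> a \<in> T \<or> b \<in> T)"

lemma extension:
  assumes "\<not> deriv D b"
  shows "\<exists>T. D \<subseteq> T \<and> primeT T \<and> b \<notin> T"
proof -
  define A where "A = {T. D \<subseteq> T \<and> \<not> deriv T b}"
  have "\<forall>C\<in>chains A. \<exists>U\<in>A. \<forall>X\<in>C. X \<subseteq> U"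
  proof
    fix C assume C: "C \<in> chains A"
    show "\<exists>U\<in>A. \<forall>X\<in>C. X \<subseteq> U"
    proof (cases "C = {}")
      case True thus ?thesis using assms A_def by auto
    next
      case False
      have "\<not> deriv (\<Union>C) b"
      proof
        assume "deriv (\<Union>C) b"
        then obtain F where F: "finite F" "F \<subseteq> \<Union>C" "deriv F b" using deriv_finite by blast
        have "subset.chain A C" using C chains_alt_def by blast
        then obtain B where "B \<in> C" "F \<subseteq> B" using finite_subset_Union_chain[OF F(1,2) False] by blast
        hence "deriv B b" using F deriv_mono by blast
        moreover have "B \<in> A" using \<open>B \<in> C\<close> C chainsD2 by blast
        ultimately show False using A_def by auto
      qed
      moreover have "D \<subseteq> \<Union>C" using False C chainsD2 A_def by fastforce
      ultimately show ?thesis using A_def by blast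
    qed
  qed
  then obtain M where M: "M \<in> A" and max: "\<forall>X\<in>A. M \<subseteq> X \<longrightarrow> X = M" using Zorn_Lemma2 by blast
  have nb: "\<not> deriv M b" "D \<subseteq> M" using M A_def by auto
  have ins: "deriv M (Imp a b)" if "a \<notin> M" for a
  proof -
    have "deriv (insert a M) b"
    proof (rule ccontr)
      assume "\<not> deriv (insert a M) b"
      hence "insert a M \<in> A" using nb A_def by auto
      thus False using max that by blast
    qed
    thus ?thesis using deduction by blast
  qed
  have cl: "\<forall>a. deriv M a \<longrightarrow> a \<in> M"
    using ins nb dmp by blast
  have bot: "Bot \<notin> M"
  proof
    assume "Bot \<in> M"
    hence "deriv M b" using dmp[OF dax[OF prov.ipc[OF ipc_axiom.ax_efq]] dassm] by blast
    thus False using nb by blast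
  qed
  have orr: "\<forall>a c. Or a c \<in> M \<longrightarrow> a \<in> M \<or> c \<in> M"
  proof (intro allI impI, rule ccontr)
    fix a c assume o: "Or a c \<in> M" and n: "\<not> (a \<in> M \<or> c \<in> M)"
    hence "deriv M (Imp a b)" "deriv M (Imp c b)" using ins by auto
    hence "deriv M b" using dmp[OF dmp[OF dmp[OF dax[OF prov.ipc[OF ipc_axiom.ax_disjE]]]]] o dassm by blast
    thus False using nb by blast
  qed
  have "b \<notin> M" using nb dassm by blast
  thus ?thesis using cl bot orr nb primeT_def by blast
qed


lemma pT_prov: "primeT T \<Longrightarrow> prov a \<Longrightarrow> a \<in> T"
  unfolding primeT_def using deriv.dax by blast
lemma pT_mp: "primeT T \<Longrightarrow> Imp a b \<in> T \<Longrightarrow> a \<in> T \<Longrightarrow> b \<in> T"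
  unfolding primeT_def using deriv.dmp deriv.dassm by blast
lemma pT_pmp: "primeT T \<Longrightarrow> prov (Imp a b) \<Longrightarrow> a \<in> T \<Longrightarrow> b \<in> T"
  using pT_prov pT_mp by blast
lemma pT_bot: "primeT T \<Longrightarrow> Bot \<notin> T" unfolding primeT_def by blast
lemma pT_and: "primeT T \<Longrightarrow> And a b \<in> T \<longleftrightarrow> a \<in> T \<and> b \<in> T"
  using pT_pmp[OF _ prov.ipc[OF ipc_axiom.ax_conjE1]] pT_pmp[OF _ prov.ipc[OF ipc_axiom.ax_conjE2]]
    pT_mp[OF _ pT_mp[OF _ pT_prov[OF _ prov.ipc[OF ipc_axiom.ax_conjI]]]] by blast
lemma pT_or: "primeT T \<Longrightarrow> Or a b \<in> T \<longleftrightarrow> a \<in> T \<or> b \<in> T"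
  using pT_pmp[OF _ prov.ipc[OF ipc_axiom.ax_disjI1]] pT_pmp[OF _ prov.ipc[OF ipc_axiom.ax_disjI2]]
  unfolding primeT_def by blast
lemma pT_top: "primeT T \<Longrightarrow> Top \<in> T"
  unfolding Top_def using pT_prov prov.ipc[OF ipc_axiom.ax_efq] by blast

lemma pT_imp_notin: "primeT T \<Longrightarrow> Imp a b \<notin> T \<Longrightarrow> \<exists>T'. T \<subseteq> T' \<and> primeT T' \<and> a \<in> T' \<and> b \<notin> T'"
proof -
  assume p: "primeT T" and n: "Imp a b \<notin> T"
  have "\<not> deriv (insert a T) b"
    using deduction p n unfolding primeT_def by blast
  then obtain T' where "insert a T \<subseteq> T'" "primeT T'" "b \<notin> T'" using extension by blast
  thus ?thesis by blast
qed

lemma pT_imp_intro: "primeT T \<Longrightarrow> (\<And>T'. T \<subseteq> T' \<Longrightarrow> primeT T' \<Longrightarrow> a \<in> T' \<Longrightarrow> b \<in> T') \<Longrightarrow> Imp a b \<in> T"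
  using pT_imp_notin by blast

lemma prov_from_all: "(\<And>T. primeT T \<Longrightarrow> a \<in> T) \<Longrightarrow> prov a"
proof (rule ccontr)
  assume h: "\<And>T. primeT T \<Longrightarrow> a \<in> T" and n: "\<not> prov a"
  have "\<not> deriv {} a" using n deriv_empty by blast
  then obtain T where "primeT T" "a \<notin> T" using extension by blast
  thus False using h by blast
qed

lemma prov_imp_from_all: "(\<And>T. primeT T \<Longrightarrow> a \<in> T \<Longrightarrow> b \<in> T) \<Longrightarrow> prov (Imp a b)"
  by (rule prov_from_all, rule pT_imp_intro) auto

lemma foldr_and: "primeT T \<Longrightarrow> foldr And xs Top \<in> T \<longleftrightarrow> set xs \<subseteq> T"
  by (induction xs) (auto simp: pT_and pT_top)
lemma foldr_or: "primeT T \<Longrightarrow> foldr Or xs Bot \<in> T \<longleftrightarrow> (\<exists>x\<in>set xs. x \<in> T)"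
  by (induction xs) (auto simp: pT_or pT_bot)

lemma big_conj_in: "finite S \<Longrightarrow> primeT T \<Longrightarrow> big_conj S \<in> T \<longleftrightarrow> S \<subseteq> T"
proof -
  assume f: "finite S" and p: "primeT T"
  have "\<exists>xs. set xs = S" using finite_list[OF f] .
  hence "set (SOME xs. set xs = S) = S" by (rule someI_ex)
  thus ?thesis unfolding big_conj_def by (simp add: foldr_and[OF p])
qed
lemma big_disj_in: "finite S \<Longrightarrow> primeT T \<Longrightarrow> big_disj S \<in> T \<longleftrightarrow> (\<exists>x\<in>S. x \<in> T)"
proof -
  assume f: "finite S" and p: "primeT T"
  have "\<exists>xs. set xs = S" using finite_list[OF f] .
  hence "set (SOME xs. set xs = S) = S" by (rule someI_ex)
  thus ?thesis unfolding big_disj_def by (simp add: foldr_or[OF p])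
qed

definition nx :: "fm set \<Rightarrow> fm set" where "nx T = {a. Next a \<in> T}"

lemma nx_deriv: "deriv (nx T) a \<Longrightarrow> primeT T \<Longrightarrow> Next a \<in> T"
proof (induction rule: deriv.induct)
  case (dassm a) thus ?case by (simp add: nx_def)
next
  case (dax a) thus ?case using pT_prov prov.nec by blast
next
  case (dmp a b) thus ?case using pT_pmp[OF _ prov.next_imp] pT_mp by blast
qed

lemma nx_prime: "primeT T \<Longrightarrow> primeT (nx T)"
proof -
  assume p: "primeT T"
  have "\<forall>a. deriv (nx T) a \<longrightarrow> a \<in> nx T" using nx_deriv p nx_def by auto
  moreover have "Bot \<notin> nx T"
  proof
    assume "Bot \<in> nx T"
    hence "Bot \<in> T" using pT_pmp[OF p prov.next_bot[unfolded Neg_def]] nx_def by auto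
    thus False using p pT_bot by blast
  qed
  moreover have "\<forall>a b. Or a b \<in> nx T \<longrightarrow> a \<in> nx T \<or> b \<in> nx T"
    using pT_pmp[OF p prov.next_or] pT_or[OF p] nx_def by auto
  ultimately show ?thesis unfolding primeT_def by blast
qed

lemma next_mono: "primeT T \<Longrightarrow> prov (Imp a b) \<Longrightarrow> Next a \<in> T \<Longrightarrow> Next b \<in> T"
  using pT_pmp[OF _ prov.next_imp] pT_mp pT_prov prov.nec by blast

lemma dia_intro: "primeT T \<Longrightarrow> a \<in> T \<Longrightarrow> Dia a \<in> T"
  using pT_pmp[OF _ prov.dia_fix] pT_or by blast
lemma dia_next: "primeT T \<Longrightarrow> Next (Dia a) \<in> T \<Longrightarrow> Dia a \<in> T"
  using pT_pmp[OF _ prov.dia_fix] pT_or by blast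

lemma dia_unfold: "primeT T \<Longrightarrow> Dia a \<in> T \<Longrightarrow> a \<in> T \<or> Next (Dia a) \<in> T"
proof -
  assume p: "primeT T" and d: "Dia a \<in> T"
  define c where "c = Or a (Next (Dia a))"
  have a1: "prov (Imp a (Dia a))" using prov_imp_from_all dia_intro by blast
  have a2: "prov (Imp (Next (Dia a)) (Dia a))" using prov_imp_from_all dia_next by blast
  have "prov (Imp (Next c) c)"
  proof (rule prov_imp_from_all)
    fix T' assume p': "primeT T'" and "Next c \<in> T'"
    hence "c \<in> nx T'" by (simp add: nx_def)
    hence "a \<in> nx T' \<or> Next (Dia a) \<in> nx T'" using pT_or[OF nx_prime[OF p']] c_def by simp
    hence "Next (Dia a) \<in> T'" using next_mono[OF p' a1] next_mono[OF p' a2] nx_def by auto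
    thus "c \<in> T'" using pT_or[OF p'] c_def by simp
  qed
  hence "prov (Imp (Dia c) c)" by (rule prov.dia_ind)
  moreover have "prov (Imp (Dia a) (Dia c))"
    by (rule prov.dia_mono, rule prov_imp_from_all) (simp add: c_def pT_or)
  ultimately have "c \<in> T" using d pT_pmp[OF p] by blast
  thus ?thesis using pT_or[OF p] c_def by simp
qed

definition CM :: "(fm set \<times> fm set) frame" where
  "CM = \<lparr>carrier = {G. primeT (snd G) \<and> fst G = - snd G}, leq = (\<lambda>G H. snd G \<subseteq> snd H),
         lab = (\<lambda>G. G),
         succ = (\<lambda>G H. primeT (snd G) \<and> fst G = - snd G \<and> H = (- nx (snd G), nx (snd G)))\<rparr>"

lemma CM_simps: "carrier CM = {G. primeT (snd G) \<and> fst G = - snd G}" "leq CM G H \<longleftrightarrow> snd G \<subseteq> snd H"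
  "lab CM G = G" "succ CM G H \<longleftrightarrow> primeT (snd G) \<and> fst G = - snd G \<and> H = (- nx (snd G), nx (snd G))"
  by (simp_all add: CM_def)

lemma CM_det: "deterministic CM"
  unfolding deterministic_def CM_simps by auto

lemma CM_type: "primeT T \<Longrightarrow> is_type UNIV (- T, T)"
  unfolding is_type_def Let_def fst_conv snd_conv
proof (intro conjI allI impI)
  assume p: "primeT T"
  show "Bot \<notin> T" using pT_bot[OF p] .
  fix a b
  show "And a b \<in> T \<longleftrightarrow> a \<in> T \<and> b \<in> T" using pT_and[OF p] .
  show "Or a b \<in> T \<longleftrightarrow> a \<in> T \<or> b \<in> T" using pT_or[OF p] .
  show "Imp a b \<in> T \<Longrightarrow> a \<in> - T \<or> b \<in> T" using pT_mp[OF p] by blast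
next
  fix a assume p: "primeT T" and "Dia a \<in> - T" thus "a \<in> - T" using dia_intro[OF p] by blast
qed auto

lemma CM_wq: "weak_quasimodel UNIV CM"
proof -
  have lf: "labelled_frame UNIV CM"
    unfolding labelled_frame_def CM_simps type_le_def
  proof (intro conjI ballI allI impI)
    fix w a b assume w: "w \<in> {G. primeT (snd G) \<and> fst G = - snd G}" and i: "Imp a b \<in> fst w"
    then obtain T' where "snd w \<subseteq> T'" "primeT T'" "a \<in> T'" "b \<notin> T'" using pT_imp_notin[of "snd w" a b] by auto
    thus "\<exists>v\<in>{G. primeT (snd G) \<and> fst G = - snd G}. snd w \<subseteq> snd v \<and> a \<in> snd v \<and> b \<in> fst v"
      by (intro bexI[of _ "(- T', T')"]) auto
  next
    fix w assume "w \<in> {G. primeT (snd G) \<and> fst G = - snd G}"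
    thus "is_type UNIV w" using CM_type by (cases w) auto
  qed (auto simp: prod_eq_iff)
  have c1: "\<forall>w v. succ CM w v \<longrightarrow> w \<in> carrier CM \<and> v \<in> carrier CM"
    using nx_prime by (auto simp: CM_simps)
  have c2: "\<forall>w\<in>carrier CM. \<forall>w'\<in>carrier CM. \<forall>v. leq CM w w' \<longrightarrow> succ CM w v \<longrightarrow>
        (\<exists>v'\<in>carrier CM. leq CM v v' \<and> succ CM w' v')"
  proof (intro ballI allI impI)
    fix w w' v assume "w \<in> carrier CM" "w' \<in> carrier CM" "leq CM w w'" "succ CM w v"
    thus "\<exists>v'\<in>carrier CM. leq CM v v' \<and> succ CM w' v'"
      using nx_prime by (intro bexI[of _ "(- nx (snd w'), nx (snd w'))"]) (auto simp: CM_simps nx_def)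
  qed
  have c3: "\<forall>w v. succ CM w v \<longrightarrow> type_S (lab CM w) (lab CM v)"
  proof (intro allI impI)
    fix w v assume s: "succ CM w v"
    hence p: "primeT (snd w)" and f: "fst w = - snd w" and v: "v = (- nx (snd w), nx (snd w))"
      by (auto simp: CM_simps)
    show "type_S (lab CM w) (lab CM v)"
      unfolding type_S_def CM_simps v using f dia_unfold[OF p] dia_next[OF p]
      by (auto simp: nx_def)
  qed
  show ?thesis unfolding weak_quasimodel_def using lf c1 c2 c3 by blast
qed


definition children :: "'w frame \<Rightarrow> 'w \<Rightarrow> 'w set" where
  "children I u = {v \<in> carrier I. leq I u v \<and> v \<noteq> u}"

lemma lab_fin:
  assumes "finite \<Sigma>" "weak_quasimodel \<Sigma> I" "u \<in> carrier I"
  shows "finite (snd (lab I u))" "finite (fst (lab I u))"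
    "fst (lab I u) \<union> snd (lab I u) = \<Sigma>"
proof -
  have "is_type \<Sigma> (lab I u)" using assms unfolding weak_quasimodel_def labelled_frame_def by blast
  hence "snd (lab I u) \<subseteq> \<Sigma>" "fst (lab I u) \<subseteq> \<Sigma>" "fst (lab I u) \<union> snd (lab I u) = \<Sigma>"
    unfolding is_type_def Let_def by auto
  thus "finite (snd (lab I u))" "finite (fst (lab I u))" "fst (lab I u) \<union> snd (lab I u) = \<Sigma>"
    using assms(1) finite_subset by auto
qed

lemma sim_fuel_in:
  assumes "finite \<Sigma>" "weak_quasimodel \<Sigma> I" "finite (carrier I)" "u \<in> carrier I"
    "primeT T" "sim_fuel I n u \<in> T" "snd (lab I u) \<subseteq> T"
  shows "(\<exists>x\<in>fst (lab I u). x \<in> T) \<or> (\<exists>m. n = Suc m \<and> (\<exists>v\<in>children I u. sim_fuel I m v \<in> T))"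
proof -
  note f = lab_fin[OF assms(1,2,4)]
  have fc: "finite (children I u)" using assms(3) unfolding children_def by auto
  have cj: "big_conj (snd (lab I u)) \<in> T" using big_conj_in[OF f(1) assms(5)] assms(7) by blast
  show ?thesis
  proof (cases n)
    case 0
    hence "Or (big_disj (fst (lab I u))) Bot \<in> T" using assms(6) pT_mp[OF assms(5) _ cj] by simp
    thus ?thesis using pT_or[OF assms(5)] pT_bot[OF assms(5)] big_disj_in[OF f(2) assms(5)] by blast
  next
    case (Suc m)
    hence "Or (big_disj (fst (lab I u))) (big_disj (sim_fuel I m ` children I u)) \<in> T"
      using assms(6) pT_mp[OF assms(5) _ cj] by (simp add: children_def)
    thus ?thesis using pT_or[OF assms(5)] big_disj_in[OF f(2) assms(5)]
        big_disj_in[OF finite_imageI[OF fc] assms(5)] Suc by blast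
  qed
qed

lemma sim_fuel_notin:
  assumes "finite \<Sigma>" "weak_quasimodel \<Sigma> I" "finite (carrier I)" "u \<in> carrier I"
    "primeT T" "sim_fuel I (Suc m) u \<notin> T"
  shows "\<exists>T'. T \<subseteq> T' \<and> primeT T' \<and> snd (lab I u) \<subseteq> T' \<and> fst (lab I u) \<inter> T' = {} \<and>
     (\<forall>v\<in>children I u. sim_fuel I m v \<notin> T')"
proof -
  note f = lab_fin[OF assms(1,2,4)]
  have fc: "finite (children I u)" using assms(3) unfolding children_def by auto
  have "Imp (big_conj (snd (lab I u))) (Or (big_disj (fst (lab I u))) (big_disj (sim_fuel I m ` children I u))) \<notin> T"
    using assms(6) by (simp add: children_def)
  then obtain T' where T': "T \<subseteq> T'" "primeT T'" "big_conj (snd (lab I u)) \<in> T'"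
    "Or (big_disj (fst (lab I u))) (big_disj (sim_fuel I m ` children I u)) \<notin> T'"
    using pT_imp_notin[OF assms(5)] by blast
  show ?thesis
    using T' big_conj_in[OF f(1) T'(2)] pT_or[OF T'(2)] big_disj_in[OF f(2) T'(2)]
        big_disj_in[OF finite_imageI[OF fc] T'(2)]
    by (intro exI[of _ T']) blast
qed

lemma sim_notin:
  assumes "finite \<Sigma>" "weak_quasimodel \<Sigma> I" "finite (carrier I)" "simulation I CM E" "E u G"
  shows "sim_fuel I n u \<notin> snd G"
  using assms(5)
proof (induction n arbitrary: u G)
  case (0 u G)
  have "u \<in> carrier I \<and> G \<in> carrier CM \<and> type_sub (lab I u) (lab CM G)"
    using assms(4) 0 unfolding simulation_def by blast
  hence u: "u \<in> carrier I" "G \<in> carrier CM" "type_sub (lab I u) G" by (auto simp: CM_simps)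
  hence p: "primeT (snd G)" "fst G = - snd G" by (auto simp: CM_simps)
  show ?case
  proof
    assume "sim_fuel I 0 u \<in> snd G"
    from sim_fuel_in[OF assms(1-3) u(1) p(1) this] u(3) p(2) show False
      unfolding type_sub_def by auto
  qed
next
  case (Suc n u G)
  have "u \<in> carrier I \<and> G \<in> carrier CM \<and> type_sub (lab I u) (lab CM G)"
    using assms(4) Suc.prems unfolding simulation_def by blast
  hence u: "u \<in> carrier I" "G \<in> carrier CM" "type_sub (lab I u) G" by (auto simp: CM_simps)
  hence p: "primeT (snd G)" "fst G = - snd G" by (auto simp: CM_simps)
  show ?case
  proof
    assume "sim_fuel I (Suc n) u \<in> snd G"
    from sim_fuel_in[OF assms(1-3) u(1) p(1) this] u(3) p(2)
    obtain v where v: "v \<in> children I u" "sim_fuel I n v \<in> snd G"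
      unfolding type_sub_def by auto
    then obtain G' where G': "G' \<in> carrier CM" "leq CM G G'" "E v G'"
      using assms(4) Suc.prems unfolding simulation_def children_def by blast
    have "sim_fuel I n v \<in> snd G'" using v G' by (auto simp: CM_simps)
    thus False using Suc.IH[OF G'(3)] by blast
  qed
qed

lemma Sim_notin:
  assumes "finite \<Sigma>" "weak_quasimodel \<Sigma> I" "finite (carrier I)" "simulates I CM u G"
  shows "Sim I u \<notin> snd G"
  using assms sim_notin unfolding simulates_def Sim_def by metis

lemma children_card:
  assumes "weak_quasimodel \<Sigma> I" "finite (carrier I)" "u \<in> carrier I" "v \<in> children I u"
  shows "card (children I v) < card (children I u)"
proof (rule psubset_card_mono)
  show "finite (children I u)" using assms(2) unfolding children_def by auto
  have lf: "labelled_frame \<Sigma> I" using assms(1) weak_quasimodel_def by blast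
  have v: "v \<in> carrier I" "leq I u v" "v \<noteq> u" using assms(4) unfolding children_def by auto
  have "children I v \<subseteq> children I u"
  proof
    fix x assume "x \<in> children I v"
    hence x: "x \<in> carrier I" "leq I v x" "x \<noteq> v" unfolding children_def by auto
    have "leq I u x" using lf x v assms(3) unfolding labelled_frame_def by blast
    moreover have "x \<noteq> u" using lf x v assms(3) unfolding labelled_frame_def by blast
    ultimately show "x \<in> children I u" using x unfolding children_def by auto
  qed
  moreover have "v \<notin> children I v" "v \<in> children I u" using assms(4) unfolding children_def by auto
  ultimately show "children I v \<subset> children I u" by blast
qed

definition simE :: "'w frame \<Rightarrow> 'w \<Rightarrow> (fm set \<times> fm set) \<Rightarrow> bool" where
  "simE I u G \<longleftrightarrow> u \<in> carrier I \<and> G \<in> carrier CM \<and> type_sub (lab I u) G \<and>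
     (\<exists>n. card (children I u) \<le> n \<and> (\<forall>v\<in>children I u. sim_fuel I n v \<notin> snd G))"

lemma simE_key:
  assumes "finite \<Sigma>" "weak_quasimodel \<Sigma> I" "finite (carrier I)"
    and u: "u \<in> carrier I" and G: "G \<in> carrier CM" and cn: "card (children I u) \<le> m"
    and ns: "sim_fuel I (Suc m) u \<notin> snd G"
  shows "\<exists>G'\<in>carrier CM. snd G \<subseteq> snd G' \<and> simE I u G'"
proof -
  have p: "primeT (snd G)" using G by (auto simp: CM_simps)
  obtain T' where T': "snd G \<subseteq> T'" "primeT T'" "snd (lab I u) \<subseteq> T'" "fst (lab I u) \<inter> T' = {}"
    "\<forall>v\<in>children I u. sim_fuel I m v \<notin> T'"
    using sim_fuel_notin[OF assms(1-3) u p ns] by blast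
  have c: "(- T', T') \<in> carrier CM" using T'(2) by (simp add: CM_simps)
  have t: "type_sub (lab I u) (- T', T')" using T'(3,4) unfolding type_sub_def by auto
  have "simE I u (- T', T')" unfolding simE_def using u c t cn T'(5) by auto
  thus ?thesis using c T'(1) by (intro bexI[of _ "(- T', T')"]) auto
qed

lemma simE_sim:
  assumes "finite \<Sigma>" "weak_quasimodel \<Sigma> I" "finite (carrier I)"
  shows "simulation I CM (simE I)"
proof -
  have s1: "\<forall>x y. simE I x y \<longrightarrow> x \<in> carrier I \<and> y \<in> carrier CM \<and> type_sub (lab I x) (lab CM y)"
    unfolding simE_def CM_simps(3) by blast
  have s2: "\<exists>y'\<in>carrier CM. leq CM y y' \<and> simE I x' y'"
    if e: "simE I x y" and x': "x' \<in> carrier I" "leq I x x'" for x y x'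
  proof (cases "x' = x")
    case True
    have "y \<in> carrier CM" using e unfolding simE_def by blast
    moreover have "leq CM y y" by (simp add: CM_simps)
    ultimately show ?thesis using e True by (intro bexI[of _ y]) simp_all
  next
    case False
    hence ch: "x' \<in> children I x" using x' unfolding children_def by auto
    obtain n where n: "card (children I x) \<le> n" "\<forall>v\<in>children I x. sim_fuel I n v \<notin> snd y"
      using e unfolding simE_def by blast
    have xc: "x \<in> carrier I" using e unfolding simE_def by blast
    have "card (children I x') < card (children I x)"
      using children_card[OF assms(2,3) xc ch] .
    then obtain m where m: "n = Suc m" "card (children I x') \<le> m" using n(1)
      by (cases n) auto
    have yc: "y \<in> carrier CM" using e unfolding simE_def by blast
    have "sim_fuel I (Suc m) x' \<notin> snd y" using n(2) ch m(1) by blast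
    from simE_key[OF assms x'(1) yc m(2) this]
    show ?thesis unfolding CM_simps(2) .
  qed
  show ?thesis unfolding simulation_def using s1 s2 by blast
qed

lemma Sim_exists:
  assumes "finite \<Sigma>" "weak_quasimodel \<Sigma> I" "finite (carrier I)" "u \<in> carrier I"
    "G \<in> carrier CM" "Sim I u \<notin> snd G"
  shows "\<exists>G'\<in>carrier CM. snd G \<subseteq> snd G' \<and> simulates I CM u G'"
proof -
  have "card (carrier I) \<noteq> 0" using assms(3,4) by auto
  then obtain N where N: "card (carrier I) = Suc N" using not0_implies_Suc by blast
  have cu: "card (children I u) \<le> N"
  proof -
    have "children I u \<subseteq> carrier I - {u}" unfolding children_def by auto
    hence "card (children I u) \<le> card (carrier I - {u})" using assms(3) by (simp add: card_mono)
    thus ?thesis using assms(3,4) N by simp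
  qed
  have "sim_fuel I (Suc N) u \<notin> snd G" using assms(6) N unfolding Sim_def by simp
  from simE_key[OF assms(1-5) cu this] obtain G' where "G' \<in> carrier CM" "snd G \<subseteq> snd G'" "simE I u G'" by blast
  thus ?thesis using simE_sim[OF assms(1-3)] unfolding simulates_def by blast
qed


lemma self_subfm: "\<phi> \<in> subfms \<phi>" by (cases \<phi>) auto

lemma sim_props: "simulates I CM u G \<Longrightarrow> u \<in> carrier I \<and> primeT (snd G) \<and> fst G = - snd G \<and> type_sub (lab I u) G"
proof -
  assume "simulates I CM u G"
  then obtain E where "simulation I CM E" "E u G" unfolding simulates_def by blast
  hence "u \<in> carrier I \<and> G \<in> carrier CM \<and> type_sub (lab I u) (lab CM G)"
    unfolding simulation_def by blast
  thus ?thesis by (simp add: CM_simps)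
qed

lemma not_prov_ex: "\<not> prov a \<Longrightarrow> \<exists>T. primeT T \<and> a \<notin> T"
  using prov_from_all by blast

lemma path_snoc:
  assumes "is_S_path F us" "succ F (last us) x"
  shows "is_S_path F (us @ [x])"
  unfolding is_S_path_def
proof (intro conjI allI impI)
  show "us @ [x] \<noteq> []" by simp
  fix i assume i: "Suc i < length (us @ [x])"
  have ne: "us \<noteq> []" using assms(1) is_S_path_def by blast
  show "succ F ((us @ [x]) ! i) ((us @ [x]) ! Suc i)"
  proof (cases "Suc i < length us")
    case True thus ?thesis using assms(1) unfolding is_S_path_def by (simp add: nth_append)
  next
    case False
    hence "i = length us - 1" using i by simp
    thus ?thesis using assms(2) ne False by (simp add: nth_append last_conv_nth)
  qed
qed

theorem proposition7p3:
  fixes \<Sigma> :: "fm set" and I :: "'w frame" and w :: 'w and \<psi> :: fm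
  assumes "finite \<Sigma>" and "subfm_closed \<Sigma>"
    and "weak_quasimodel \<Sigma> I" and "finite (carrier I)"
    and "\<forall>A :: (fm set \<times> fm set) frame. weak_quasimodel UNIV A \<and> deterministic A \<longrightarrow>
           simulation I A (simulates I A) \<and> dynamic I A (simulates I A) \<and>
           surjective I A (simulates I A)"
    and "w \<in> Pset I" and "Dia \<psi> \<in> snd (lab I w)"
  shows "\<exists>v\<in>Rset I w. \<psi> \<in> snd (lab I v)"
proof (rule ccontr)
  assume neg: "\<not> (\<exists>v\<in>Rset I w. \<psi> \<in> snd (lab I v))"
  note A = assms(1,3,4)
  have dyn: "dynamic I CM (simulates I CM)"
    using HOL.mp[OF spec[OF assms(5), of CM] conjI[OF CM_wq CM_det]] by (rule conjunct1[OF conjunct2])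
  define R where "R = Rset I w"
  have RP: "R \<subseteq> Pset I" unfolding R_def Rset_def by blast
  have Rc: "R \<subseteq> carrier I" using RP unfolding Pset_def by blast
  have Rfin: "finite (Sim I ` R)" using finite_imageI[OF finite_subset[OF Rc assms(4)]] .
  define chi where "chi = big_conj (Sim I ` R)"
  have chi_in: "chi \<in> T \<longleftrightarrow> (\<forall>u\<in>R. Sim I u \<in> T)" if "primeT T" for T
    using big_conj_in[OF Rfin that] chi_def by blast
  have F1: "Sim I u \<notin> snd G" if "simulates I CM u G" for u G
    using Sim_notin[OF A that] .
  have F3: "u \<in> Pset I" if "simulates I CM u G" for u G
  proof -
    have sp: "u \<in> carrier I" "primeT (snd G)" using sim_props[OF that] by auto
    have "\<not> prov (Sim I u)" using pT_prov[OF sp(2)] F1[OF that] by blast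
    thus ?thesis using sp(1) unfolding Pset_def by blast
  qed
  have wc: "w \<in> carrier I" using assms(6) unfolding Pset_def by simp
  have psiS: "\<psi> \<in> \<Sigma>"
  proof -
    have "Dia \<psi> \<in> \<Sigma>" using assms(7) lab_fin(3)[OF assms(1,3) wc] by blast
    hence "subfms (Dia \<psi>) \<subseteq> \<Sigma>" using assms(2) subfm_closed_def by blast
    thus ?thesis using self_subfm[of \<psi>] by auto
  qed
  have ext: "\<exists>G'. T \<subseteq> snd G' \<and> simulates I CM u G'"
    if "primeT T" "Sim I u \<notin> T" "u \<in> carrier I" for T u
  proof -
    have "(- T, T) \<in> carrier CM" using that(1) by (simp add: CM_simps)
    from Sim_exists[OF A that(3) this] that(2) obtain G' where "G' \<in> carrier CM" "T \<subseteq> snd G'" "simulates I CM u G'" by auto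
    thus ?thesis by blast
  qed
  have a: "prov (Imp \<psi> chi)"
  proof (rule prov_imp_from_all)
    fix T assume p: "primeT T" and ps: "\<psi> \<in> T"
    have "Sim I u \<in> T" if u: "u \<in> R" for u
    proof (rule ccontr)
      assume "Sim I u \<notin> T"
      then obtain G' where G': "T \<subseteq> snd G'" "simulates I CM u G'" using ext p u Rc by blast
      note sp = sim_props[OF G'(2)]
      have "\<psi> \<in> fst (lab I u) \<union> snd (lab I u)" using lab_fin[OF assms(1,3)] sp psiS by blast
      moreover have "\<psi> \<notin> fst (lab I u)" using sp G' ps unfolding type_sub_def by auto
      ultimately have "\<psi> \<in> snd (lab I u)" by blast
      thus False using neg u R_def by blast
    qed
    thus "chi \<in> T" using chi_in[OF p] by blast
  qed
  have b: "prov (Imp (Next chi) chi)"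
  proof (rule prov_imp_from_all)
    fix T assume p: "primeT T" and nc: "Next chi \<in> T"
    have "Sim I u \<in> T" if u: "u \<in> R" for u
    proof (rule ccontr)
      assume "Sim I u \<notin> T"
      then obtain G' where G': "T \<subseteq> snd G'" "simulates I CM u G'" using ext p u Rc by blast
      note sp = sim_props[OF G'(2)]
      define G2 where "G2 = (- nx (snd G'), nx (snd G'))"
      have "succ CM G' G2" using sp G2_def by (simp add: CM_simps)
      then obtain u' where u': "succ I u u'" "simulates I CM u' G2"
        using dyn G'(2) unfolding dynamic_def by blast
      have p2: "primeT (nx (snd G'))" using nx_prime sp by blast
      have "chi \<in> nx (snd G')" using nc G'(1) nx_def by auto
      have uR: "u' \<in> R"
      proof -
        obtain us where us: "is_S_path I us" "hd us = w" "last us = u" "set us \<subseteq> Pset I"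
          using u unfolding R_def Rset_def by blast
        have ne: "us \<noteq> []" using us(1) is_S_path_def by blast
        have "is_S_path I (us @ [u'])" using path_snoc[OF us(1)] us(3) u'(1) by blast
        moreover have "hd (us @ [u']) = w" using ne us(2) by simp
        moreover have "set (us @ [u']) \<subseteq> Pset I" using us(4) F3[OF u'(2)] by simp
        moreover have "last (us @ [u']) = u'" by simp
        ultimately have "\<exists>us. is_S_path I us \<and> hd us = w \<and> last us = u' \<and> set us \<subseteq> Pset I" by blast
        thus ?thesis unfolding R_def Rset_def mem_Collect_eq using F3[OF u'(2)] by blast
      qed
      have "Sim I u' \<in> snd G2" using \<open>chi \<in> nx (snd G')\<close> uR chi_in[OF p2] G2_def by simp
      thus False using F1[OF u'(2)] by blast
    qed
    thus "chi \<in> T" using chi_in[OF p] by blast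
  qed
  have c: "prov (Imp (Dia chi) chi)" using prov.dia_ind[OF b] .
  have d: "prov (Imp (Dia \<psi>) (Dia chi))" using prov.dia_mono[OF a] .
  have "\<not> prov (Sim I w)" using assms(6) unfolding Pset_def by simp
  then obtain T where T: "primeT T" "Sim I w \<notin> T" using not_prov_ex by blast
  obtain G' where G': "T \<subseteq> snd G'" "simulates I CM w G'" using ext[OF T wc] by blast
  note sp = sim_props[OF G'(2)]
  have "Dia \<psi> \<in> snd G'" using sp assms(7) unfolding type_sub_def by blast
  hence "chi \<in> snd G'" using pT_pmp[OF conjunct1[OF conjunct2[OF sp]]] c d by blast
  moreover have "w \<in> R"
  proof -
    have "is_S_path I [w] \<and> hd [w] = w \<and> last [w] = w \<and> set [w] \<subseteq> Pset I"
      using assms(6) by (simp add: is_S_path_def)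
    thus ?thesis unfolding R_def Rset_def mem_Collect_eq using assms(6) by blast
  qed
  ultimately have "Sim I w \<in> snd G'" using chi_in sp by blast
  thus False using F1[OF G'(2)] by blast
qed


end
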